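(* Let $G$ be a loopy graph with $\mathrm{vm}(G)=k$ which is edge-maximal with respect to this property, i.e. adding to $G$ any edge not already in $G$ (between vertices of $G$, loops included) yields a graph with vertex-maximal matching number different from $k$. Let $\ell=\lambda(G)$ be the number of loops of $G$. Then $G$ contains $LK_\ell$; that is, the loopy vertices of $G$ are pairwise adjacent.
   Context: A loopy graph is a finite graph with no isolated vertices and no multiple edges, possibly with loops. A vertex is loopy if it carries a loop; $\lambda(G)$ is the number of loops (= number of loopy vertices). A matching is a set of pairwise vertex-disjoint edges, loops allowed; $\mathrm{vm}(G)$ is the maximum number of vertices touched by a matching of $G$. $LK_\ell$ denotes the complete graph $K_\ell$ with a loop attached at each vertex. *)

theory Defs
  imports Main
begin

text \<open>A loopy graph on vertex set V: edges are 1-element sets (loops) or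
2-element sets (ordinary edges); finite, no isolated vertices, no multiple edges
(automatic since E is a set).\<close>

definition loopy_graph :: "'a set \<Rightarrow> 'a set set \<Rightarrow> bool" where
  "loopy_graph V E \<longleftrightarrow> finite V \<and>
     (\<forall>e\<in>E. e \<subseteq> V \<and> (card e = 1 \<or> card e = 2)) \<and>
     (\<forall>v\<in>V. \<exists>e\<in>E. v \<in> e)"

definition is_edge_on :: "'a set \<Rightarrow> 'a set \<Rightarrow> bool" where
  "is_edge_on V e \<longleftrightarrow> e \<subseteq> V \<and> (card e = 1 \<or> card e = 2)"

definition matching :: "'a set set \<Rightarrow> 'a set set \<Rightarrow> bool" where
  "matching E M \<longleftrightarrow> M \<subseteq> E \<and> (\<forall>e\<in>M. \<forall>f\<in>M. e \<noteq> f \<longrightarrow> e \<inter> f = {})"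

definition vm :: "'a set set \<Rightarrow> nat" where
  "vm E = Max {card (\<Union>M) | M. matching E M}"

definition loopy :: "'a set set \<Rightarrow> 'a \<Rightarrow> bool" where
  "loopy E v \<longleftrightarrow> {v} \<in> E"

end

theory Submission
  imports Defs
begin

lemma set_eq_aux:
  assumes "{u} \<in> E" "{v} \<in> E" "u \<noteq> v"
  shows "{card (\<Union>M) | M. matching (insert {u,v} E) M} = {card (\<Union>M) | M. matching E M}"
proof (intro set_eqI iffI)
  fix x assume "x \<in> {card (\<Union>M) | M. matching E M}"
  then obtain M where "matching E M" "x = card (\<Union>M)" by blast
  then have "matching (insert {u,v} E) M" unfolding matching_def by blast
  then show "x \<in> {card (\<Union>M) | M. matching (insert {u,v} E) M}"
    using \<open>x = _\<close> by blast
next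
  fix x assume "x \<in> {card (\<Union>M) | M. matching (insert {u,v} E) M}"
  then obtain M where M: "matching (insert {u,v} E) M" and x: "x = card (\<Union>M)" by blast
  have Msub: "M \<subseteq> insert {u,v} E" using M by (simp add: matching_def)
  have Md: "\<And>a b. a \<in> M \<Longrightarrow> b \<in> M \<Longrightarrow> a \<noteq> b \<Longrightarrow> a \<inter> b = {}"
    using M by (simp add: matching_def)
  show "x \<in> {card (\<Union>M) | M. matching E M}"
  proof (cases "{u,v} \<in> M")
    case False
    have "M \<subseteq> E" using Msub False by blast
    then have "matching E M" using Md unfolding matching_def by blast
    then show ?thesis using x by blast
  next
    case True
    define M' where "M' = insert {u} (insert {v} (M - {{u,v}}))"
    have U: "\<Union>M' = \<Union>M" unfolding M'_def using True by blast
    have d1: "\<And>f. f \<in> M - {{u,v}} \<Longrightarrow> u \<notin> f \<and> v \<notin> f"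
    proof -
      fix f assume f: "f \<in> M - {{u,v}}"
      then have "f \<inter> {u,v} = {}" using Md[of f "{u,v}"] True by blast
      then show "u \<notin> f \<and> v \<notin> f" by blast
    qed
    have "M' \<subseteq> E"
    proof
      fix e assume "e \<in> M'"
      then consider "e = {u}" | "e = {v}" | "e \<in> M - {{u,v}}" unfolding M'_def by blast
      then show "e \<in> E"
      proof cases
        case 1 then show ?thesis using assms(1) by simp
      next
        case 2 then show ?thesis using assms(2) by simp
      next
        case 3 then show ?thesis using Msub by blast
      qed
    qed
    moreover have "\<forall>e\<in>M'. \<forall>f\<in>M'. e \<noteq> f \<longrightarrow> e \<inter> f = {}"
    proof (intro ballI impI)
      fix e f assume e: "e \<in> M'" and f: "f \<in> M'" and ef: "e \<noteq> f"
      from e consider "e = {u}" | "e = {v}" | "e \<in> M - {{u,v}}" unfolding M'_def by blast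
      then show "e \<inter> f = {}"
      proof cases
        case 1
        from f consider "f = {u}" | "f = {v}" | "f \<in> M - {{u,v}}" unfolding M'_def by blast
        then show ?thesis
        proof cases
          case 1 then show ?thesis using ef \<open>e = {u}\<close> by simp
        next
          case 2 then show ?thesis using assms(3) \<open>e = {u}\<close> by simp
        next
          case 3 then show ?thesis using d1[OF 3] \<open>e = {u}\<close> by simp
        qed
      next
        case 2
        from f consider "f = {u}" | "f = {v}" | "f \<in> M - {{u,v}}" unfolding M'_def by blast
        then show ?thesis
        proof cases
          case 1 then show ?thesis using assms(3) \<open>e = {v}\<close> by simp
        next
          case 2 then show ?thesis using ef \<open>e = {v}\<close> by simp
        next
          case 3 then show ?thesis using d1[OF 3] \<open>e = {v}\<close> by simp
        qed
      next
        case 3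
        from f consider "f = {u}" | "f = {v}" | "f \<in> M - {{u,v}}" unfolding M'_def by blast
        then show ?thesis
        proof cases
          case 1 then show ?thesis using d1[OF 3] by simp
        next
          case 2 then show ?thesis using d1[OF 3] by simp
        next
          case c3: 3 then show ?thesis using Md 3 ef by simp
        qed
      qed
    qed
    ultimately have mE: "matching E M'" unfolding matching_def by blast
    have "x = card (\<Union>M')" using x U by simp
    then show ?thesis using mE by blast
  qed
qed

theorem proposition3p8:
  fixes V :: "'a set" and E :: "'a set set" and k :: nat
  assumes "loopy_graph V E"
    and "vm E = k"
    and "\<And>e. is_edge_on V e \<Longrightarrow> e \<notin> E \<Longrightarrow> vm (insert e E) \<noteq> k"
  shows "\<forall>u\<in>V. \<forall>v\<in>V. loopy E u \<longrightarrow> loopy E v \<longrightarrow> u \<noteq> v \<longrightarrow> {u, v} \<in> E"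
proof (intro ballI impI, rule ccontr)
  fix u v assume uv: "u \<in> V" "v \<in> V" "loopy E u" "loopy E v" "u \<noteq> v" "{u,v} \<notin> E"
  have "card {u,v} = 2" using uv(5) by simp
  then have "is_edge_on V {u,v}" unfolding is_edge_on_def using uv(1,2) by simp
  moreover have "{u} \<in> E" "{v} \<in> E" using uv(3,4) unfolding loopy_def by simp_all
  then have "vm (insert {u,v} E) = k"
    using set_eq_aux[of u E v] uv(5) assms(2) unfolding vm_def by simp
  ultimately show False using assms(3) uv(6) by blast
qed

end
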